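(* For types $\sigma,\tau\in\mathbb{T}_C$: $\sigma\le\tau$ if and only if for each path $\pi\in\mathbb{P}(\tau)$ there exists a path $\pi'\in\mathbb{P}(\sigma)$ with $\pi'\le\pi$ such that: if $\pi\equiv\alpha$ (resp. $\pi\equiv a$) then $\pi'\equiv\alpha$ (resp. $\pi'\equiv a$); if $\pi\equiv\sigma_2\to\tau_2$ then $\pi'\equiv\sigma_1\to\tau_1$ with $\sigma_2\le\sigma_1$ and $\tau_1\le\tau_2$; if $\pi\equiv c(\tau_1)$ then $\pi'\equiv c(\sigma_1)$ with $\sigma_1\le\tau_1$.
   Context: Types $\mathbb{T}_C\ni\tau ::= a\mid\alpha\mid\omega\mid\tau_1\to\tau_2\mid\tau_1\cap\tau_2\mid c(\tau)$ ($a$ constants, $\alpha$ type variables, $c$ unary constructors). Subtyping $\le$: least preorder with $\sigma\le\omega$; $\omega\le\omega\to\omega$; $\sigma\cap\tau\le\sigma$; $\sigma\cap\tau\le\tau$; $\sigma\le\tau_1,\sigma\le\tau_2\Rightarrow\sigma\le\tau_1\cap\tau_2$; $(\sigma\to\tau_1)\cap(\sigma\to\tau_2)\le\sigma\to\tau_1\cap\tau_2$; $\sigma_2\le\sigma_1,\tau_1\le\tau_2\Rightarrow\sigma_1\to\tau_1\le\sigma_2\to\tau_2$; $\tau_1\le\tau_2\Rightarrow c(\tau_1)\le c(\tau_2)$; $c(\tau_1)\cap c(\tau_2)\le c(\tau_1\cap\tau_2)$. Paths: $\pi ::= a\mid\alpha\mid\sigma\to\pi\mid c(\omega)\mid c(\pi)$.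 $\mathbb{P}(a)=\{a\}$, $\mathbb{P}(\alpha)=\{\alpha\}$, $\mathbb{P}(\omega)=\emptyset$, $\mathbb{P}(\sigma\to\tau)=\{\sigma\to\pi\mid\pi\in\mathbb{P}(\tau)\}$, $\mathbb{P}(\sigma\cap\tau)=\mathbb{P}(\sigma)\cup\mathbb{P}(\tau)$, $\mathbb{P}(c(\tau))=\{c(\omega)\}$ if $\mathbb{P}(\tau)=\emptyset$, else $\{c(\pi)\mid\pi\in\mathbb{P}(\tau)\}$. $\equiv$ denotes syntactic identity. *)

theory Defs
  imports Main
begin

datatype ('a, 'v, 'c) ty =
    Const 'a
  | TVar 'v
  | Omega
  | Arr "('a, 'v, 'c) ty" "('a, 'v, 'c) ty"
  | Inter "('a, 'v, 'c) ty" "('a, 'v, 'c) ty"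
  | Ctor 'c "('a, 'v, 'c) ty"

inductive subty :: "('a, 'v, 'c) ty \<Rightarrow> ('a, 'v, 'c) ty \<Rightarrow> bool" (infix "\<le>\<^sub>T" 50) where
  refl: "s \<le>\<^sub>T s"
| trans: "s \<le>\<^sub>T t \<Longrightarrow> t \<le>\<^sub>T u \<Longrightarrow> s \<le>\<^sub>T u"
| omega_top: "s \<le>\<^sub>T Omega"
| omega_arr: "Omega \<le>\<^sub>T Arr Omega Omega"
| inter_l: "Inter s t \<le>\<^sub>T s"
| inter_r: "Inter s t \<le>\<^sub>T t"
| inter_glb: "s \<le>\<^sub>T t1 \<Longrightarrow> s \<le>\<^sub>T t2 \<Longrightarrow> s \<le>\<^sub>T Inter t1 t2"
| arr_inter: "Inter (Arr s t1) (Arr s t2) \<le>\<^sub>T Arr s (Inter t1 t2)"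
| arr_sub: "s2 \<le>\<^sub>T s1 \<Longrightarrow> t1 \<le>\<^sub>T t2 \<Longrightarrow> Arr s1 t1 \<le>\<^sub>T Arr s2 t2"
| ctor_mono: "t1 \<le>\<^sub>T t2 \<Longrightarrow> Ctor c t1 \<le>\<^sub>T Ctor c t2"
| ctor_inter: "Inter (Ctor c t1) (Ctor c t2) \<le>\<^sub>T Ctor c (Inter t1 t2)"

fun paths :: "('a, 'v, 'c) ty \<Rightarrow> ('a, 'v, 'c) ty set" where
  "paths (Const a) = {Const a}"
| "paths (TVar v) = {TVar v}"
| "paths Omega = {}"
| "paths (Arr s t) = Arr s ` paths t"
| "paths (Inter s t) = paths s \<union> paths t"
| "paths (Ctor c t) = (if paths t = {} then {Ctor c Omega} else Ctor c ` paths t)"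

end

theory Submission
  imports Defs
begin

definition R :: "('a, 'v, 'c) ty \<Rightarrow> ('a, 'v, 'c) ty \<Rightarrow> bool" where
  "R \<pi>' \<pi> \<longleftrightarrow> \<pi>' \<le>\<^sub>T \<pi> \<and>
       (\<forall>v. \<pi> = TVar v \<longrightarrow> \<pi>' = TVar v) \<and>
       (\<forall>a. \<pi> = Const a \<longrightarrow> \<pi>' = Const a) \<and>
       (\<forall>\<sigma>2 \<tau>2. \<pi> = Arr \<sigma>2 \<tau>2 \<longrightarrow>
          (\<exists>\<sigma>1 \<tau>1. \<pi>' = Arr \<sigma>1 \<tau>1 \<and> \<sigma>2 \<le>\<^sub>T \<sigma>1 \<and> \<tau>1 \<le>\<^sub>T \<tau>2)) \<and>
       (\<forall>c \<tau>1. \<pi> = Ctor c \<tau>1 \<longrightarrow>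
          (\<exists>\<sigma>1. \<pi>' = Ctor c \<sigma>1 \<and> \<sigma>1 \<le>\<^sub>T \<tau>1))"

lemma R_refl: "R p p"
  unfolding R_def by (auto intro: subty.refl)

lemma R_trans: "R p q \<Longrightarrow> R q r \<Longrightarrow> R p r"
  unfolding R_def
  apply (elim conjE)
  apply (intro conjI allI impI)
      apply (blast intro: subty.trans)
     apply blast
    apply blast
   apply (metis subty.trans ty.inject(3))
  apply (metis subty.trans ty.inject(5))
  done

definition Q where "Q s t \<longleftrightarrow> (\<forall>\<pi>\<in>paths t. \<exists>\<pi>'\<in>paths s. R \<pi>' \<pi>)"

lemma Q_sub: "paths t \<subseteq> paths s \<Longrightarrow> Q s t"
  unfolding Q_def using R_refl by blast

lemma sound: "s \<le>\<^sub>T t \<Longrightarrow> Q s t"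
proof (induction rule: subty.induct)
  case (refl s) then show ?case by (simp add: Q_sub)
next
  case (trans s t u) then show ?case unfolding Q_def by (meson R_trans)
next
  case (omega_top s) then show ?case by (simp add: Q_def)
next
  case omega_arr then show ?case by (simp add: Q_def)
next
  case (inter_l s t) then show ?case by (simp add: Q_sub)
next
  case (inter_r s t) then show ?case by (simp add: Q_sub)
next
  case (inter_glb s t1 t2) then show ?case by (auto simp: Q_def)
next
  case (arr_inter s t1 t2) then show ?case by (simp add: Q_sub image_Un)
next
  case (arr_sub s2 s1 t1 t2)
  show ?case unfolding Q_def
  proof
    fix p assume "p \<in> paths (Arr s2 t2)"
    then obtain q where q: "q \<in> paths t2" "p = Arr s2 q" by auto
    from arr_sub.IH(2) q obtain q' where q': "q' \<in> paths t1" "R q' q" unfolding Q_def by blast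
    have "R (Arr s1 q') p" using q q' arr_sub.hyps unfolding R_def
      by (auto intro: subty.arr_sub)
    then show "\<exists>p'\<in>paths (Arr s1 t1). R p' p" using q' by auto
  qed
next
  case (ctor_mono t1 t2 c)
  show ?case unfolding Q_def
  proof
    fix p assume p: "p \<in> paths (Ctor c t2)"
    show "\<exists>p'\<in>paths (Ctor c t1). R p' p"
    proof (cases "paths t2 = {}")
      case True
      then have pe: "p = Ctor c Omega" using p by simp
      obtain p' where "p' \<in> paths (Ctor c t1)" "\<exists>u. p' = Ctor c u"
        by (cases "paths t1 = {}") auto
      then show ?thesis unfolding pe R_def
        by (auto intro: subty.omega_top subty.refl subty.ctor_mono)
    next
      case False
      then obtain q where q: "q \<in> paths t2" "p = Ctor c q" using p by auto
      from ctor_mono.IH q obtain q' where q': "q' \<in> paths t1" "R q' q" unfolding Q_def by blast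
      then have "Ctor c q' \<in> paths (Ctor c t1)" by auto
      moreover have "R (Ctor c q') p" using q q' unfolding R_def
        by (auto intro: subty.ctor_mono)
      ultimately show ?thesis by blast
    qed
  qed
next
  case (ctor_inter c t1 t2)
  show ?case by (rule Q_sub) auto
qed

lemma path_le: "p \<in> paths t \<Longrightarrow> t \<le>\<^sub>T p"
proof (induction t arbitrary: p)
  case (Arr s t) then show ?case by (auto intro: subty.arr_sub subty.refl)
next
  case (Inter s t) then show ?case by (metis Un_iff paths.simps(5) subty.inter_l subty.inter_r subty.trans)
next
  case (Ctor c t) then show ?case
    by (auto split: if_splits intro: subty.ctor_mono subty.omega_top)
qed (auto intro: subty.refl)

lemma paths_sup:
  assumes up: "\<And>x y. P x \<Longrightarrow> x \<le>\<^sub>T y \<Longrightarrow> P y"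
    and int: "\<And>x y. P x \<Longrightarrow> P y \<Longrightarrow> P (Inter x y)"
    and om: "P Omega"
    and all: "\<forall>p\<in>paths t. P p"
  shows "P t"
  using up int om all
proof (induction t arbitrary: P)
  case (Arr s t)
  let ?P = "\<lambda>r. P (Arr s r)"
  have "?P t"
  proof (rule Arr.IH(2))
    show "\<And>x y. ?P x \<Longrightarrow> x \<le>\<^sub>T y \<Longrightarrow> ?P y"
      using Arr.prems(1)[OF _ subty.arr_sub[OF subty.refl]] by blast
    show "\<And>x y. ?P x \<Longrightarrow> ?P y \<Longrightarrow> ?P (Inter x y)"
      using Arr.prems(1)[OF Arr.prems(2) subty.arr_inter] by blast
    show "?P Omega"
      using Arr.prems(1)[OF Arr.prems(3) subty.trans[OF subty.omega_arr subty.arr_sub[OF subty.omega_top subty.refl]]] .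
    show "\<forall>p\<in>paths t. ?P p" using Arr.prems(4) by auto
  qed
  then show ?case .
next
  case (Inter s t)
  have "P s" using Inter.prems by (intro Inter.IH(1)[of P]) auto
  moreover have "P t" using Inter.prems by (intro Inter.IH(2)[of P]) auto
  ultimately show ?case by (rule Inter.prems(2))
next
  case (Ctor c t)
  let ?P = "\<lambda>r. P (Ctor c r)"
  have "?P t"
  proof (rule Ctor.IH)
    show "\<And>x y. ?P x \<Longrightarrow> x \<le>\<^sub>T y \<Longrightarrow> ?P y"
      using Ctor.prems(1)[OF _ subty.ctor_mono] by blast
    show "\<And>x y. ?P x \<Longrightarrow> ?P y \<Longrightarrow> ?P (Inter x y)"
      using Ctor.prems(1)[OF Ctor.prems(2) subty.ctor_inter] by blast
    show "?P Omega"
    proof (cases "paths t = {}")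
      case True then show ?thesis using Ctor.prems(4) by simp
    next
      case False
      then obtain q where "q \<in> paths t" by auto
      then have "P (Ctor c q)" using Ctor.prems(4) False by auto
      then show ?thesis using Ctor.prems(1)[OF _ subty.ctor_mono[OF subty.omega_top]] by blast
    qed
    show "\<forall>p\<in>paths t. ?P p" using Ctor.prems(4) by (auto split: if_splits)
  qed
  then show ?case .
qed auto

theorem lemma4p10:
  fixes \<sigma> \<tau> :: "('a, 'v, 'c) ty"
  shows "\<sigma> \<le>\<^sub>T \<tau> \<longleftrightarrow>
    (\<forall>\<pi> \<in> paths \<tau>. \<exists>\<pi>' \<in> paths \<sigma>. \<pi>' \<le>\<^sub>T \<pi> \<and>
       (\<forall>v. \<pi> = TVar v \<longrightarrow> \<pi>' = TVar v) \<and>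
       (\<forall>a. \<pi> = Const a \<longrightarrow> \<pi>' = Const a) \<and>
       (\<forall>\<sigma>2 \<tau>2. \<pi> = Arr \<sigma>2 \<tau>2 \<longrightarrow>
          (\<exists>\<sigma>1 \<tau>1. \<pi>' = Arr \<sigma>1 \<tau>1 \<and> \<sigma>2 \<le>\<^sub>T \<sigma>1 \<and> \<tau>1 \<le>\<^sub>T \<tau>2)) \<and>
       (\<forall>c \<tau>1. \<pi> = Ctor c \<tau>1 \<longrightarrow>
          (\<exists>\<sigma>1. \<pi>' = Ctor c \<sigma>1 \<and> \<sigma>1 \<le>\<^sub>T \<tau>1)))"
  (is "_ \<longleftrightarrow> ?rhs")
proof
  assume "\<sigma> \<le>\<^sub>T \<tau>"
  then have "Q \<sigma> \<tau>" by (rule sound)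
  then show ?rhs unfolding Q_def R_def .
next
  assume ?rhs
  then have q: "Q \<sigma> \<tau>" unfolding Q_def R_def .
  show "\<sigma> \<le>\<^sub>T \<tau>"
  proof (rule paths_sup[where P = "\<lambda>r. \<sigma> \<le>\<^sub>T r"])
    show "\<forall>p\<in>paths \<tau>. \<sigma> \<le>\<^sub>T p"
    proof
      fix p assume "p \<in> paths \<tau>"
      then obtain p' where "p' \<in> paths \<sigma>" "R p' p" using q unfolding Q_def by blast
      then have "\<sigma> \<le>\<^sub>T p'" "p' \<le>\<^sub>T p" using path_le unfolding R_def by auto
      then show "\<sigma> \<le>\<^sub>T p" by (rule subty.trans)
    qed
  qed (fact subty.trans subty.inter_glb subty.omega_top)+
qed

end
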